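(* Let $N\ge\kappa\ge1$ be integers and let $\mathbf a_1,\dots,\mathbf a_N\in\mathbb R^{\kappa}$ be such that every collection of at most $\kappa$ of them is linearly independent. Let $\mathbf A$ be the block matrix $\mathbf A=[\mathbf A_{m,n}]_{m,n=1}^N\in\mathbb R^{N\kappa\times(N\kappa-\kappa(\kappa-1)/2)}$, where $\mathbf A_{m,n}\in\mathbb R^{\kappa\times\min\{\kappa,N-n+1\}}$ has $q$-th column ($1\le q\le\min\{\kappa,N-n+1\}$) $$\mathbf A_{m,n}(:,q)=\begin{cases}\mathbf a_{q+n-1}, & m=n,\\ \mathbf a_n, & m=q+n-1\ (\text{and } m\ne n),\\ \mathbf 0, & \text{otherwise}.\end{cases}$$ Then $\operatorname{rank}(\mathbf A)=N\kappa-\frac{\kappa(\kappa-1)}{2}$.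
   Context: $\mathbf A$ is the coefficient matrix of the linear system in the variables $B_{n,m}$, $n\le m\le \min\{n+\kappa-1,N\}$, obtained by writing $\mathbf B\mathbf M=\boldsymbol\Gamma$ row by row for a real symmetric band matrix $\mathbf B$ of band width $\kappa-1$, where $\mathbf M$ has rows $\mathbf a_n^T$; the column of $\mathbf A$ indexed by block $n$ and position $q$ corresponds to the variable $B_{n,n+q-1}$. *)

theory Defs
  imports "Jordan_Normal_Form.DL_Rank"
begin

text \<open>0-based indexing throughout: vectors a j (j < N) in R^kappa, given as
  coordinate functions a j i (i < kappa).\<close>

definition small_sets_indep :: "nat \<Rightarrow> nat \<Rightarrow> (nat \<Rightarrow> nat \<Rightarrow> real) \<Rightarrow> bool" where
  "small_sets_indep N \<kappa> a \<longleftrightarrow>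
     (\<forall>S. S \<subseteq> {0..<N} \<and> card S \<le> \<kappa> \<longrightarrow>
        (\<forall>c :: nat \<Rightarrow> real. (\<forall>i<\<kappa>. (\<Sum>j\<in>S. c j * a j i) = 0) \<longrightarrow> (\<forall>j\<in>S. c j = 0)))"

definition col_labels :: "nat \<Rightarrow> nat \<Rightarrow> (nat \<times> nat) list" where
  "col_labels N \<kappa> = concat (map (\<lambda>n. map (\<lambda>q. (n, q)) [0..<min \<kappa> (N - n)]) [0..<N])"

text \<open>Entry of block A_{m,n}, row i, column q (all 0-based).\<close>
definition A_entry :: "nat \<Rightarrow> (nat \<Rightarrow> nat \<Rightarrow> real) \<Rightarrow> nat \<Rightarrow> nat \<Rightarrow> nat \<Rightarrow> nat \<Rightarrow> real" where
  "A_entry \<kappa> a m i n q =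
     (if m = n then a (q + n) i else if m = q + n then a n i else 0)"

definition A_mat :: "nat \<Rightarrow> nat \<Rightarrow> (nat \<Rightarrow> nat \<Rightarrow> real) \<Rightarrow> real mat" where
  "A_mat N \<kappa> a = mat (N * \<kappa>) (length (col_labels N \<kappa>))
     (\<lambda>(r, c). case col_labels N \<kappa> ! c of (n, q) \<Rightarrow> A_entry \<kappa> a (r div \<kappa>) (r mod \<kappa>) n q)"

end

theory Submission
  imports Defs
begin

lemma labels_set: "set (col_labels N \<kappa>) = {(n,q). n<N \<and> q < min \<kappa> (N-n)}"
  by (auto simp: col_labels_def)

lemma distinct_concat_pairs: "distinct xs \<Longrightarrow> distinct (concat (map (\<lambda>n. map (Pair n) (g n)) xs))"
  if "\<And>n. distinct (g n)"
  using that by (induction xs) (auto simp: distinct_map inj_on_def)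

lemma labels_distinct: "distinct (col_labels N \<kappa>)"
  unfolding col_labels_def by (rule distinct_concat_pairs) auto

lemma gauss_aux: "(\<Sum>t<k. t + 1) * 2 = k * (k + 1::nat)"
  by (induction k) auto

lemma labels_len: assumes "\<kappa> \<le> N" shows "length (col_labels N \<kappa>) = N * \<kappa> - \<kappa> * (\<kappa> - 1) div 2"
proof -
  have "length (col_labels N \<kappa>) = (\<Sum>n<N. min \<kappa> (N - n))"
    by (simp add: col_labels_def length_concat comp_def sum_list_sum_nth atLeast0LessThan)
  also have "\<dots> = (\<Sum>t<N. min \<kappa> (t+1))"
    by (rule sum.reindex_bij_witness[of _ "\<lambda>t. N - 1 - t" "\<lambda>t. N - 1 - t"]) auto
  also have "\<dots> = N * \<kappa> - \<kappa> * (\<kappa> - 1) div 2"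
    using assms
  proof (induction N rule: dec_induct)
    case base
    have "(\<Sum>t<\<kappa>. min \<kappa> (t+1)) = (\<Sum>t<\<kappa>. t+1)" by (intro sum.cong) auto
    moreover have "(\<Sum>t<\<kappa>. t + 1) * 2 = \<kappa> * (\<kappa> + 1)" by (rule gauss_aux)
    moreover have ev: "\<kappa> * (\<kappa> - 1) div 2 * 2 = \<kappa> * (\<kappa> - 1)"
    proof -
      have "even (\<kappa> * (\<kappa> - 1))" by (cases "even \<kappa>") auto
      then show ?thesis by simp
    qed
    moreover have "\<kappa> * (\<kappa> + 1) = \<kappa> * (\<kappa> - 1) + 2 * \<kappa>" by (cases \<kappa>) auto
    moreover have "\<kappa> * \<kappa> = \<kappa> * (\<kappa> - 1) + \<kappa>" by (cases \<kappa>) auto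
    ultimately show ?case by linarith
  next
    case (step n)
    have "\<kappa> * (\<kappa> - 1) div 2 \<le> n * \<kappa>"
    proof -
      have "\<kappa> * (\<kappa> - 1) div 2 \<le> \<kappa> * (\<kappa> - 1)" by simp
      also have "\<dots> \<le> \<kappa> * n" using step by (intro mult_le_mono2) simp
      also have "\<dots> = n * \<kappa>" by simp
      finally show ?thesis .
    qed
    then show ?case using step by (simp add: algebra_simps)
  qed
  finally show ?thesis .
qed

lemma kernel:
  assumes indep: "small_sets_indep N \<kappa> a"
    and hz: "\<And>r. r < N * \<kappa> \<Longrightarrow> (\<Sum>c<length (col_labels N \<kappa>). A_mat N \<kappa> a $$ (r,c) * w c) = 0"
    and cc: "c < length (col_labels N \<kappa>)"
  shows "w c = 0"
proof -
  define L where "L = col_labels N \<kappa>"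
  define nc where "nc = length L"
  have dL: "distinct L" unfolding L_def by (rule labels_distinct)
  have sL: "set L = {(n,q). n<N \<and> q < min \<kappa> (N-n)}" unfolding L_def by (rule labels_set)
  define x where "x p = w (THE c. c < nc \<and> L!c = p)" for p
  have xL: "x (L!c) = w c" if "c < nc" for c
  proof -
    have "(THE c'. c' < nc \<and> L!c' = L!c) = c"
      using that dL unfolding nc_def by (auto simp: nth_eq_iff_index_eq)
    then show ?thesis by (simp add: x_def)
  qed
  define g where "g m i p = A_entry \<kappa> a m i (fst p) (snd p) * x p" for m i p
  have eq: "(\<Sum>p\<in>set L. g m i p) = 0" if "m < N" "i < \<kappa>" for m i
  proof -
    define r where "r = m * \<kappa> + i"
    have kp: "\<kappa> > 0" using that by simp
    have rlt: "r < N * \<kappa>"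
    proof -
      have "r < m * \<kappa> + \<kappa>" using that unfolding r_def by simp
      also have "\<dots> = Suc m * \<kappa>" by simp
      also have "\<dots> \<le> N * \<kappa>" using that by (intro mult_le_mono1) simp
      finally show ?thesis .
    qed
    have rd: "r div \<kappa> = m" "r mod \<kappa> = i" using that kp unfolding r_def by auto
    have ent: "A_mat N \<kappa> a $$ (r,c) * w c = g m i (L!c)" if "c < nc" for c
    proof -
      obtain n q where nq: "L!c = (n,q)" by fastforce
      have "A_mat N \<kappa> a $$ (r,c) = A_entry \<kappa> a m i n q"
        using rlt \<open>c<nc\<close> nq rd unfolding A_mat_def L_def nc_def by simp
      then show ?thesis using xL[OF that] nq by (simp add: g_def)
    qed
    have "0 = (\<Sum>c<nc. A_mat N \<kappa> a $$ (r,c) * w c)" using hz[OF rlt] unfolding nc_def L_def by simp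
    also have "\<dots> = (\<Sum>c<nc. g m i (L!c))" by (rule sum.cong) (auto simp: ent)
    also have "\<dots> = (\<Sum>p\<in>nth L ` {..<nc}. g m i p)"
      by (rule sum.reindex[symmetric, unfolded comp_def]) (use dL in \<open>simp add: nc_def inj_on_nth\<close>)
    also have "nth L ` {..<nc} = set L"
      unfolding nc_def using nth_image[of "length L" L] by (simp add: atLeast0LessThan)
    finally show ?thesis by simp
  qed
  have main: "m < N \<Longrightarrow> \<forall>q < min \<kappa> (N-m). x (m,q) = 0" for m
  proof (induction m rule: less_induct)
    case (less m)
    define K where "K = min \<kappa> (N - m)"
    define S where "S = (\<lambda>q. q + m) ` {..<K}"
    define cf where "cf j = x (m, j - m)" for j
    have injS: "inj_on (\<lambda>q. q + m) {..<K}" by (auto simp: inj_on_def)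
    have sumS: "(\<Sum>j\<in>S. cf j * a j i) = 0" if "i < \<kappa>" for i
    proof -
      have "(\<Sum>j\<in>S. cf j * a j i) = (\<Sum>q<K. cf (q+m) * a (q+m) i)"
        unfolding S_def by (rule sum.reindex[OF injS, unfolded comp_def])
      also have "\<dots> = (\<Sum>q<K. g m i (m,q))"
        by (rule sum.cong) (auto simp: cf_def g_def A_entry_def)
      also have "\<dots> = (\<Sum>p\<in>Pair m ` {..<K}. g m i p)"
        by (rule sum.reindex[symmetric, unfolded comp_def]) (auto simp: inj_on_def)
      also have "\<dots> = (\<Sum>p\<in>set L. g m i p)"
      proof (rule sum.mono_neutral_left)
        show "finite (set L)" by simp
        show "Pair m ` {..<K} \<subseteq> set L" using less.prems by (auto simp: sL K_def)
        show "\<forall>p\<in>set L - Pair m ` {..<K}. g m i p = 0"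
        proof
          fix p assume p: "p \<in> set L - Pair m ` {..<K}"
          obtain n q where pnq: "p = (n,q)" by fastforce
          have nN: "n < N" and qlt: "q < min \<kappa> (N-n)" using p pnq sL by auto
          have "n \<noteq> m" using p pnq sL K_def by auto
          show "g m i p = 0"
          proof (cases "m = q + n")
            case True
            then have "n < m" using \<open>n \<noteq> m\<close> by simp
            then have "x (n,q) = 0" using less.IH[of n] nN qlt by blast
            then show ?thesis by (simp add: g_def pnq)
          next
            case False
            then show ?thesis using \<open>n \<noteq> m\<close> by (simp add: g_def pnq A_entry_def)
          qed
        qed
      qed
      also have "\<dots> = 0" using eq[OF less.prems that] .
      finally show ?thesis .
    qed
    have Ssub: "S \<subseteq> {0..<N}" unfolding S_def K_def by auto
    have Scard: "card S \<le> \<kappa>" unfolding S_def K_def using card_image[OF injS] K_def by simp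
    have "\<forall>j\<in>S. cf j = 0" using indep Ssub Scard sumS unfolding small_sets_indep_def by blast
    then show ?case unfolding S_def cf_def K_def by auto
  qed
  have cnc: "c < nc" using cc unfolding nc_def L_def .
  obtain n q where nq: "L!c = (n,q)" by fastforce
  have "(n,q) \<in> set L" using nq cnc nc_def by (metis nth_mem)
  then have "x (n,q) = 0" using main sL by auto
  then show ?thesis using xL[OF cnc] nq by simp
qed

theorem lemma2:
  fixes N \<kappa> :: nat and a :: "nat \<Rightarrow> nat \<Rightarrow> real"
  assumes "1 \<le> \<kappa>" and "\<kappa> \<le> N"
    and "small_sets_indep N \<kappa> a"
  shows "vec_space.rank (N * \<kappa>) (A_mat N \<kappa> a) = N * \<kappa> - \<kappa> * (\<kappa> - 1) div 2"
proof -
  interpret V: vec_space "TYPE(real)" "N * \<kappa>" .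
  define A where "A = A_mat N \<kappa> a"
  define nc where "nc = length (col_labels N \<kappa>)"
  have Ac: "A \<in> carrier_mat (N * \<kappa>) nc" unfolding A_def A_mat_def nc_def by simp
  have ker: "w c = 0" if "\<And>r. r < N * \<kappa> \<Longrightarrow> (\<Sum>c<nc. A $$ (r,c) * w c) = 0" "c < nc" for w c
    using kernel[OF assms(3), of w c] that unfolding A_def nc_def by blast
  have dist: "distinct (cols A)"
    unfolding cols_def distinct_map
  proof
    show "distinct [0..<dim_col A]" by simp
    show "inj_on (col A) (set [0..<dim_col A])"
    proof (rule inj_onI, rule ccontr)
      fix c1 c2 assume c1: "c1 \<in> set [0..<dim_col A]" and c2: "c2 \<in> set [0..<dim_col A]"
        and eqc: "col A c1 = col A c2" and ne: "c1 \<noteq> c2"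
      have c1n: "c1 < nc" and c2n: "c2 < nc" using c1 c2 Ac by auto
      define w where "w k = (if k = c1 then 1 else if k = c2 then -1 else (0::real))" for k
      have "w c1 = 0"
      proof (rule ker[OF _ c1n])
        fix r assume r: "r < N * \<kappa>"
        have "(\<Sum>c<nc. A $$ (r,c) * w c) = A $$ (r,c1) - A $$ (r,c2)"
          using c1n c2n ne by (simp add: w_def if_distrib sum.If_cases)
        also have "\<dots> = col A c1 $ r - col A c2 $ r" using r c1n c2n Ac by auto
        finally show "(\<Sum>c<nc. A $$ (r,c) * w c) = 0" using eqc by simp
      qed
      then show False by (simp add: w_def)
    qed
  qed
  have indpt: "V.lin_indpt (set (cols A))"
  proof
    assume "V.lin_dep (set (cols A))"
    then obtain v where v: "v \<in> carrier_vec nc" "v \<noteq> 0\<^sub>v nc" "A *\<^sub>v v = 0\<^sub>v (N * \<kappa>)"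
      using V.lin_depE[OF Ac _ dist] by blast
    have "v = 0\<^sub>v nc"
    proof (rule eq_vecI)
      show "dim_vec v = dim_vec (0\<^sub>v nc)" using v by simp
      fix c assume "c < dim_vec (0\<^sub>v nc)"
      then have c: "c < nc" by simp
      have "v $ c = 0"
      proof (rule ker[OF _ c])
        fix r assume r: "r < N * \<kappa>"
        have "0 = (A *\<^sub>v v) $ r" using v r by simp
        also have "\<dots> = (\<Sum>c<nc. A $$ (r,c) * v $ c)"
          using r Ac v(1) by (auto simp: scalar_prod_def atLeast0LessThan intro!: sum.cong)
        finally show "(\<Sum>c<nc. A $$ (r,c) * v $ c) = 0" by simp
      qed
      then show "v $ c = 0\<^sub>v nc $ c" using c by simp
    qed
    then show False using v by simp
  qed
  have "V.rank A = nc" by (rule V.lin_indpt_full_rank[OF Ac dist indpt])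
  then show ?thesis unfolding A_def nc_def using labels_len[OF assms(2)] by simp
qed
end
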